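(* Let $\mathbb{F}_q$ be any finite field, $S\subseteq\mathbb{F}_q\setminus\{0\}$ any symmetric set, $G=\Gamma(\mathbb{F}_q,S)$, and $\overline{G}=\Gamma(\mathbb{F}_q,\overline S)$ its complement, where $\overline S=(\mathbb{F}_q\setminus\{0\})\setminus S$. Define $\rho_{\mathrm{lin}}(G)=q^{1-\frac{|S|}{q-1}}$ and $\rho_{\mathrm{lin}}(\overline G)=q^{1-\frac{|\overline S|}{q-1}}$. Then exactly one of the following holds: (a) $\rho_{\mathrm{lin}}(G)=\vartheta(G)$ and $\rho_{\mathrm{lin}}(\overline{G})=\vartheta(\overline{G})$; (b) for one of the graphs $H\in\{G,\overline G\}$, $\rho_{\mathrm{lin}}(H)<\vartheta(H)$.
   Context: For a symmetric set $S\subseteq\mathbb{F}_q\setminus\{0\}$ ($S=-S$), the Cayley graph $\Gamma(\mathbb{F}_q,S)$ has vertex set $\mathbb{F}_q$, with $u\sim v$ iff $u-v\in S$. $\vartheta(\cdot)$ denotes the Lovász theta function of a graph. The quantity $\rho_{\mathrm{lin}}(\Gamma(\mathbb{F}_q,S))=q^{1-|S|/(q-1)}$ is an upper bound on the linear Shannon capacity $\Theta_{\mathrm{lin}}(\Gamma(\mathbb{F}_q,S))=\sup_k\alpha_{\mathrm{lin}}(G^k)^{1/k}$, where $\alpha_{\mathrm{lin}}(G^k)$ is the largest size of an independent set in the $k$-fold strong product $G^k$ that is a linear subspace of $\mathbb{F}_q^k$. *)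

theory Defs
  imports Complex_Main
begin

definition cayley_adj :: "'a::ab_group_add set \<Rightarrow> 'a \<Rightarrow> 'a \<Rightarrow> bool" where
  "cayley_adj S u v \<longleftrightarrow> u - v \<in> S"

definition lovasz_theta :: "('v::finite \<Rightarrow> 'v \<Rightarrow> bool) \<Rightarrow> real" where
  "lovasz_theta E = Sup {(\<Sum>i\<in>UNIV. \<Sum>j\<in>UNIV. B i j) | B :: 'v \<Rightarrow> 'v \<Rightarrow> real.
      (\<forall>i j. B i j = B j i) \<and>
      (\<forall>x :: 'v \<Rightarrow> real. 0 \<le> (\<Sum>i\<in>UNIV. \<Sum>j\<in>UNIV. x i * B i j * x j)) \<and>
      (\<Sum>i\<in>UNIV. B i i) = 1 \<and>
      (\<forall>i j. E i j \<longrightarrow> B i j = 0)}"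

definition rho_lin :: "'a::{field,finite} set \<Rightarrow> real" where
  "rho_lin S = real (card (UNIV :: 'a set)) powr (1 - real (card S) / (real (card (UNIV :: 'a set)) - 1))"

end

theory Submission imports Defs "HOL-Analysis.Analysis" begin

definition quad :: "('v::finite \<Rightarrow> 'v \<Rightarrow> real) \<Rightarrow> ('v \<Rightarrow> real) \<Rightarrow> real" where
  "quad B x = (\<Sum>i\<in>UNIV. \<Sum>j\<in>UNIV. x i * B i j * x j)"

definition feas :: "('v::finite \<Rightarrow> 'v \<Rightarrow> bool) \<Rightarrow> ('v \<Rightarrow> 'v \<Rightarrow> real) \<Rightarrow> bool" where
  "feas E B \<longleftrightarrow> (\<forall>i j. B i j = B j i) \<and> (\<forall>x. 0 \<le> quad B x) \<and> (\<Sum>i\<in>UNIV. B i i) = 1 \<and> (\<forall>i j. E i j \<longrightarrow> B i j = 0)"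

definition tot :: "('v::finite \<Rightarrow> 'v \<Rightarrow> real) \<Rightarrow> real" where
  "tot B = (\<Sum>i\<in>UNIV. \<Sum>j\<in>UNIV. B i j)"

lemma theta_alt: "lovasz_theta E = Sup (tot ` {B. feas E B})"
  unfolding lovasz_theta_def feas_def quad_def tot_def
  by (rule arg_cong[where f=Sup]) auto

lemma sum_if_const: "(\<Sum>j\<in>A. if P then f j else 0) = (if P then sum f A else 0)"
  by auto

lemma mult_if1: "(f :: real) * (if P then 1 else 0) = (if P then f else 0)" by simp
lemma if_mult0: "(if P then (f::real) else 0) * g = (if P then f * g else 0)" by simp

lemma quad_diff:
  fixes B :: "'v::finite \<Rightarrow> 'v \<Rightarrow> real"
  assumes "i \<noteq> j"
  shows "quad B (\<lambda>k. (if k = i then 1 else 0) - (if k = j then 1 else 0)) = B i i - B i j - B j i + B j j"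
  using assms by (simp add: quad_def left_diff_distrib right_diff_distrib sum_subtractf if_distrib[where f="\<lambda>x. x * _"] sum_if_const mult_if1 cong: if_cong)

lemma tot_le:
  fixes B :: "'v::finite \<Rightarrow> 'v \<Rightarrow> real"
  assumes "feas E B"
  shows "tot B \<le> real CARD('v)"
proof -
  have psd: "\<And>x. 0 \<le> quad B x" and sy: "\<And>i j. B i j = B j i" and tr: "(\<Sum>i\<in>UNIV. B i i) = 1"
    using assms by (auto simp: feas_def)
  have h: "2 * B i j \<le> B i i + B j j" for i j
  proof (cases "i = j")
    case True
    then show ?thesis by simp
  next
    case False
    from psd[of "\<lambda>k. (if k = i then 1 else 0) - (if k = j then 1 else 0)"] quad_diff[OF False, of B] sy[of i j]
    show ?thesis by simp
  qed
  have "2 * tot B = (\<Sum>i\<in>UNIV. \<Sum>j\<in>UNIV. 2 * B i j)"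
    by (simp add: tot_def sum_distrib_left)
  also have "\<dots> \<le> (\<Sum>i\<in>UNIV. \<Sum>j\<in>UNIV. B i i + B j j)"
    by (intro sum_mono h)
  also have "\<dots> = 2 * real CARD('v)"
    by (simp add: sum.distrib tr sum.swap[of "\<lambda>i j. B j j"] flip: sum_distrib_left)
  finally show ?thesis by simp
qed

lemma bdd: "bdd_above (tot ` {B :: 'v::finite \<Rightarrow> 'v \<Rightarrow> real. feas E B})"
  using tot_le by (intro bdd_aboveI2) blast

lemma theta_ge: "feas E B \<Longrightarrow> tot B \<le> lovasz_theta E"
  unfolding theta_alt by (intro cSup_upper bdd) auto

lemma theta_ge1:
  fixes E :: "'v::finite \<Rightarrow> 'v \<Rightarrow> bool"
  assumes irr: "\<forall>i. \<not> E i i"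
  shows "1 \<le> lovasz_theta E"
proof -
  define B :: "'v \<Rightarrow> 'v \<Rightarrow> real" where "B i j = (if i = j then 1 / real CARD('v) else 0)" for i j
  have q: "quad B x = (\<Sum>i\<in>UNIV. x i * x i) / real CARD('v)" for x
    by (simp add: quad_def B_def sum_divide_distrib if_distrib[where f="\<lambda>y. _ * y"] if_mult0 cong: if_cong)
  have "feas E B"
    unfolding feas_def using irr
    by (auto simp: q B_def intro!: divide_nonneg_nonneg sum_nonneg)
  moreover have "tot B = 1" by (simp add: tot_def B_def)
  ultimately show ?thesis using theta_ge by metis
qed


lemma norm1_sum:
  fixes x :: "real^'v::finite"
  assumes "norm x = 1"
  shows "(\<Sum>i\<in>UNIV. x$i * x$i) = 1"
proof -
  have "sqrt (\<Sum>i\<in>UNIV. (x$i)^2) = 1" using assms by (simp add: norm_vec_def L2_set_def)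
  then show ?thesis by (simp add: power2_eq_square)
qed

lemma sq_sum_helper:
  fixes f :: "'v::finite \<Rightarrow> real"
  shows "(\<Sum>i\<in>UNIV. \<Sum>j\<in>UNIV. c * (f i * f j)) = c * (\<Sum>i\<in>UNIV. f i)^2"
proof -
  have "c * (\<Sum>i\<in>UNIV. f i)^2 = c * ((\<Sum>i\<in>UNIV. f i) * (\<Sum>j\<in>UNIV. f j))"
    by (simp add: power2_eq_square)
  also have "\<dots> = c * (\<Sum>i\<in>UNIV. \<Sum>j\<in>UNIV. f i * f j)" by (simp only: sum_product)
  also have "\<dots> = (\<Sum>i\<in>UNIV. \<Sum>j\<in>UNIV. c * (f i * f j))" by (simp add: sum_distrib_left)
  finally show ?thesis by simp
qed

lemma no_feas_big:
  fixes E :: "'v::finite \<Rightarrow> 'v \<Rightarrow> bool"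
  assumes "lovasz_theta E < t"
  defines "\<psi> \<equiv> \<lambda>x::real^'v. ((\<chi> p. if E (fst p) (snd p) then x$fst p * x$snd p else 0) :: real^('v\<times>'v), (\<Sum>i\<in>UNIV. x$i)^2)"
  shows "convex hull (\<psi> ` sphere 0 1) \<inter> ({0} \<times> {t..}) = {}"
proof (rule ccontr)
  assume "convex hull (\<psi> ` sphere 0 1) \<inter> ({0} \<times> {t..}) \<noteq> {}"
  then obtain y where yy: "y \<in> convex hull (\<psi> ` sphere 0 1) \<inter> ({0} \<times> {t..})"
    by blast
  then have yK: "y \<in> convex hull (\<psi> ` sphere 0 1)" and y0: "fst y = 0" and yt: "snd y \<ge> t"
    by (auto simp: mem_Times_iff)
  obtain Sf u where fin: "finite Sf" and Ssub: "Sf \<subseteq> \<psi> ` sphere 0 1" and u0: "\<forall>w\<in>Sf. 0 \<le> u w"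
    and u1: "sum u Sf = 1" and ysum: "(\<Sum>w\<in>Sf. u w *\<^sub>R w) = y"
    using yK unfolding convex_hull_explicit by blast
  define g where "g w = (SOME x. x \<in> sphere 0 1 \<and> \<psi> x = w)" for w
  have g: "norm (g w) = 1 \<and> \<psi> (g w) = w" if "w \<in> Sf" for w
  proof -
    have "w \<in> \<psi> ` sphere 0 1" using Ssub that by blast
    then have "\<exists>x. x \<in> sphere 0 1 \<and> \<psi> x = w" by blast
    then have "g w \<in> sphere 0 1 \<and> \<psi> (g w) = w" unfolding g_def by (rule someI_ex)
    then show ?thesis by simp
  qed
  define B where "B i j = (\<Sum>w\<in>Sf. u w * ((g w)$i * (g w)$j))" for i j
  have fstw: "fst w $ (i, j) = (if E i j then (g w)$i * (g w)$j else 0)" if "w \<in> Sf" for w i j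
  proof -
    have "fst w = fst (\<psi> (g w))" using g[OF that] by simp
    then show ?thesis by (simp add: \<psi>_def)
  qed
  have sndw: "snd w = (\<Sum>i\<in>UNIV. (g w)$i)^2" if "w \<in> Sf" for w
  proof -
    have "snd w = snd (\<psi> (g w))" using g[OF that] by simp
    then show ?thesis by (simp add: \<psi>_def)
  qed
  have "feas E B"
    unfolding feas_def
  proof (intro conjI allI impI)
    fix i j show "B i j = B j i" by (simp add: B_def mult.commute)
  next
    fix z :: "'v \<Rightarrow> real"
    have "quad B z = (\<Sum>w\<in>Sf. u w * (\<Sum>i\<in>UNIV. z i * (g w)$i)^2)"
      by (simp add: quad_def B_def power2_eq_square sum_product sum_distrib_left sum_distrib_right
          sum.swap[of _ Sf] algebra_simps)
    also have "\<dots> \<ge> 0" using u0 by (intro sum_nonneg) auto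
    finally show "0 \<le> quad B z" .
  next
    have "(\<Sum>i\<in>UNIV. B i i) = (\<Sum>w\<in>Sf. u w * (\<Sum>i\<in>UNIV. (g w)$i * (g w)$i))"
      by (simp add: B_def sum_distrib_left sum.swap[of _ Sf])
    also have "\<dots> = (\<Sum>w\<in>Sf. u w)" using g norm1_sum by (intro sum.cong) auto
    finally show "(\<Sum>i\<in>UNIV. B i i) = 1" using u1 by simp
  next
    fix i j assume Eij: "E i j"
    have "0 = (fst y) $ (i,j)" using y0 by simp
    also have "\<dots> = (\<Sum>w\<in>Sf. u w * fst w $ (i,j))" by (simp add: ysum[symmetric] fst_sum)
    also have "\<dots> = B i j" unfolding B_def using fstw Eij by (intro sum.cong) auto
    finally show "B i j = 0" by simp
  qed
  have "tot B = (\<Sum>w\<in>Sf. u w * (\<Sum>i\<in>UNIV. (g w)$i)^2)"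
    by (simp add: tot_def B_def sum.swap[of _ Sf] sq_sum_helper)
  also have "\<dots> = (\<Sum>w\<in>Sf. u w * snd w)" using sndw by (intro sum.cong) auto
  also have "\<dots> = snd y" by (simp add: ysum[symmetric] snd_sum)
  finally have "tot B \<ge> t" using yt by simp
  with theta_ge[OF \<open>feas E B\<close>] assms(1) show False by simp
qed


lemma cert:
  fixes E :: "'v::finite \<Rightarrow> 'v \<Rightarrow> bool"
  assumes symE: "\<forall>i j. E i j \<longrightarrow> E j i" and irr: "\<forall>i. \<not> E i i"
    and lt: "lovasz_theta E < t"
  shows "\<exists>A. (\<forall>i j. A i j = A j i) \<and> (\<forall>i j. \<not> E i j \<longrightarrow> A i j = 0) \<and>
            (\<forall>y. quad A y + (\<Sum>i\<in>UNIV. y i)^2 \<le> t * (\<Sum>i\<in>UNIV. y i * y i))"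
proof -
  define \<psi> where "\<psi> \<equiv> \<lambda>x::real^'v. ((\<chi> p. if E (fst p) (snd p) then x$fst p * x$snd p else 0) :: real^('v\<times>'v), (\<Sum>i\<in>UNIV. x$i)^2)"
  define K where "K = convex hull (\<psi> ` sphere 0 1)"
  have disj: "K \<inter> ({0} \<times> {t..}) = {}"
    unfolding K_def \<psi>_def by (rule no_feas_big[OF lt])
  have cont: "continuous_on UNIV \<psi>"
    unfolding \<psi>_def
  proof (intro continuous_intros)
    fix p :: "'v \<times> 'v"
    show "continuous_on UNIV (\<lambda>x::real^'v. if E (fst p) (snd p) then x $ fst p * x $ snd p else 0)"
      by (cases "E (fst p) (snd p)") (auto intro!: continuous_intros)
  qed
  have "compact K"
    unfolding K_def
    by (intro compact_convex_hull compact_continuous_image continuous_on_subset[OF cont] compact_sphere) auto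
  obtain k :: 'v where True by blast
  have psik: "\<psi> (axis k 1) = (0, 1)"
    using irr by (auto simp: \<psi>_def vec_eq_iff axis_def)
  have kK: "(0, 1) \<in> K"
    unfolding K_def using psik[symmetric] by (intro hull_inc) (auto intro!: image_eqI[where x="axis k 1"])
  obtain a b where ha: "\<forall>x\<in>K. inner a x < b" and hb: "\<forall>x\<in>{0} \<times> {t..}. inner a x > b"
    using separating_hyperplane_compact_closed[of K "{0} \<times> {t..}"] disj \<open>compact K\<close> kK
    by (auto simp: K_def convex_Times closed_Times)
  obtain a1 c where ac: "a = (a1, c)" by (cases a)
  have hs: "c * s > b" if "s \<ge> t" for s
    using hb that by (auto simp: ac)
  have cb: "c < b" using ha kK by (auto simp: ac)
  have cpos: "c > 0"
  proof (rule ccontr)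
    assume "\<not> c > 0"
    show False
    proof (cases "c = 0")
      case True then show ?thesis using hs[of t] cb by simp
    next
      case False
      then have "c < 0" using \<open>\<not> c > 0\<close> by simp
      have "c * max t (b / c) \<le> c * (b / c)"
        using \<open>c < 0\<close> by (intro mult_left_mono_neg) auto
      also have "\<dots> = b" using False by simp
      finally show False using hs[of "max t (b/c)"] by simp
    qed
  qed
  have unit: "inner a1 (fst (\<psi> x)) + c * (\<Sum>i\<in>UNIV. x$i)^2 < c * t" if "norm x = 1" for x
  proof -
    have "\<psi> x \<in> K" unfolding K_def using that by (intro hull_inc) auto
    then have "inner a (\<psi> x) < b" using ha by blast
    moreover have "snd (\<psi> x) = (\<Sum>i\<in>UNIV. x$i)^2" by (simp add: \<psi>_def)
    ultimately have "inner a1 (fst (\<psi> x)) + c * (\<Sum>i\<in>UNIV. x$i)^2 < b"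
      by (cases "\<psi> x") (simp add: ac)
    then show ?thesis using hs[of t] by simp
  qed
  define P where "P i j = (if E i j then a1 $ (i,j) else 0)" for i j
  define A where "A i j = (P i j + P j i) / (2 * c)" for i j
  have innerP: "inner a1 (fst (\<psi> x)) = (\<Sum>i\<in>UNIV. \<Sum>j\<in>UNIV. x$i * P i j * x$j)" for x
  proof -
    have "inner a1 (fst (\<psi> x)) = (\<Sum>p\<in>UNIV. a1 $ p * (if E (fst p) (snd p) then x$fst p * x$snd p else 0))"
      by (simp add: \<psi>_def inner_vec_def)
    also have "\<dots> = (\<Sum>p\<in>UNIV \<times> UNIV. a1 $ p * (if E (fst p) (snd p) then x$fst p * x$snd p else 0))"
      by simp
    also have "\<dots> = (\<Sum>i\<in>UNIV. \<Sum>j\<in>UNIV. a1 $ (i,j) * (if E i j then x$i * x$j else 0))"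
      by (simp add: sum.cartesian_product case_prod_beta)
    also have "\<dots> = (\<Sum>i\<in>UNIV. \<Sum>j\<in>UNIV. x$i * P i j * x$j)"
      by (intro sum.cong) (auto simp: P_def)
    finally show ?thesis .
  qed
  have quadA: "c * quad A y = (\<Sum>i\<in>UNIV. \<Sum>j\<in>UNIV. y i * P i j * y j)" for y
  proof -
    have "c * quad A y = (\<Sum>i\<in>UNIV. \<Sum>j\<in>UNIV. y i * P i j * y j) / 2 + (\<Sum>i\<in>UNIV. \<Sum>j\<in>UNIV. y i * P j i * y j) / 2"
    proof -
      have t: "c * (y i * A i j * y j) = y i * P i j * y j / 2 + y i * P j i * y j / 2" for i j
        using cpos by (simp add: A_def field_simps)
      have "c * quad A y = (\<Sum>i\<in>UNIV. \<Sum>j\<in>UNIV. c * (y i * A i j * y j))"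
        by (simp add: quad_def sum_distrib_left)
      also have "\<dots> = (\<Sum>i\<in>UNIV. \<Sum>j\<in>UNIV. y i * P i j * y j / 2 + y i * P j i * y j / 2)"
        by (simp only: t)
      also have "\<dots> = (\<Sum>i\<in>UNIV. \<Sum>j\<in>UNIV. y i * P i j * y j) / 2 + (\<Sum>i\<in>UNIV. \<Sum>j\<in>UNIV. y i * P j i * y j) / 2"
        by (simp only: sum.distrib sum_divide_distrib)
      finally show ?thesis .
    qed
    also have "(\<Sum>i\<in>UNIV. \<Sum>j\<in>UNIV. y i * P j i * y j) = (\<Sum>i\<in>UNIV. \<Sum>j\<in>UNIV. y i * P i j * y j)"
      by (subst sum.swap) (simp add: mult.commute mult.left_commute)
    finally show ?thesis by simp
  qed
  have main: "quad A y + (\<Sum>i\<in>UNIV. y i)^2 \<le> t * (\<Sum>i\<in>UNIV. y i * y i)" for y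
  proof (cases "(\<Sum>i\<in>UNIV. y i * y i) = 0")
    case True
    then have "\<forall>i\<in>UNIV. y i * y i = 0" by (subst sum_nonneg_eq_0_iff[symmetric]) auto
    then have "y = (\<lambda>_. 0)" by auto
    then show ?thesis by (simp add: quad_def)
  next
    case False
    define N where "N = sqrt (\<Sum>i\<in>UNIV. y i * y i)"
    have Sge: "(\<Sum>i\<in>UNIV. y i * y i) > 0" using False by (simp add: sum_nonneg less_le)
    then have Npos: "N > 0" by (simp add: N_def)
    have N2: "N * N = (\<Sum>i\<in>UNIV. y i * y i)" using Sge by (simp add: N_def)
    define x :: "real^'v" where "x = (\<chi> i. y i / N)"
    have "norm x = 1"
    proof -
      have "(\<Sum>i\<in>UNIV. (x$i)^2) = (\<Sum>i\<in>UNIV. y i * y i) / (N * N)"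
        by (simp add: x_def power2_eq_square sum_divide_distrib)
      also have "\<dots> = 1" using N2 Sge by simp
      finally show ?thesis by (simp add: norm_vec_def L2_set_def)
    qed
    from unit[OF this] innerP quadA
    have "c * quad A (\<lambda>i. x$i) + c * (\<Sum>i\<in>UNIV. x$i)^2 < c * t" by simp
    then have lt1: "quad A (\<lambda>i. x$i) + (\<Sum>i\<in>UNIV. x$i)^2 < t"
      using cpos by (simp add: distrib_left[symmetric])
    have q1: "quad A (\<lambda>i. x$i) = quad A y / (N * N)"
      by (simp add: quad_def x_def sum_divide_distrib)
    have s1: "(\<Sum>i\<in>UNIV. x$i)^2 = (\<Sum>i\<in>UNIV. y i)^2 / (N * N)"
      by (simp add: x_def power2_eq_square flip: sum_divide_distrib)
    from lt1 have "(quad A y + (\<Sum>i\<in>UNIV. y i)^2) / (N * N) < t"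
      by (simp add: q1 s1 add_divide_distrib)
    then have "quad A y + (\<Sum>i\<in>UNIV. y i)^2 < t * (N * N)"
      using Npos by (simp add: divide_less_eq)
    then show ?thesis using N2 by simp
  qed
  have "\<forall>i j. A i j = A j i" by (simp add: A_def add.commute)
  moreover have "\<forall>i j. \<not> E i j \<longrightarrow> A i j = 0"
    using symE by (auto simp: A_def P_def)
  ultimately show ?thesis using main by blast
qed


lemma quad_lin:
  fixes A D :: "'v::finite \<Rightarrow> 'v \<Rightarrow> real"
  shows "quad (\<lambda>i j. (D i j - A i j) / r) y = (quad D y - quad A y) / r"
  by (simp add: quad_def sum_subtractf diff_divide_distrib right_diff_distrib left_diff_distrib
      flip: sum_divide_distrib)

lemma quad_diag:
  fixes y :: "'v::finite \<Rightarrow> real"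
  shows "quad (\<lambda>i j. if i = j then t else 0) y = t * (\<Sum>i\<in>UNIV. y i * y i)"
  by (simp add: quad_def if_distrib[where f="\<lambda>z. _ * z"] if_mult0 sum_distrib_left mult.commute mult.left_commute cong: if_cong)

lemma prod_ge:
  fixes E F :: "'v::finite \<Rightarrow> 'v \<Rightarrow> bool"
  assumes symE: "\<forall>i j. E i j \<longrightarrow> E j i" and irr: "\<forall>i. \<not> E i i"
    and F: "\<forall>i j. F i j \<longleftrightarrow> (i \<noteq> j \<and> \<not> E i j)"
  shows "real CARD('v) \<le> lovasz_theta E * lovasz_theta F"
proof -
  define T where "T = lovasz_theta E"
  define n where "n = real CARD('v)"
  have T1: "T \<ge> 1" unfolding T_def by (rule theta_ge1[of E, OF irr])
  have F1: "lovasz_theta F \<ge> 1" by (rule theta_ge1) (use F in auto)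
  have n0: "n > 0" by (simp add: n_def)
  have key: "n / (T + e) \<le> lovasz_theta F" if ep0: "e > 0" for e
  proof -
    define t where "t = T + e"
    have tpos: "t > 0" using T1 ep0 by (simp add: t_def)
    obtain A where Asym: "\<forall>i j. A i j = A j i" and A0: "\<forall>i j. \<not> E i j \<longrightarrow> A i j = 0"
      and Aq: "\<forall>y. quad A y + (\<Sum>i\<in>UNIV. y i)^2 \<le> t * (\<Sum>i\<in>UNIV. y i * y i)"
      using cert[OF symE irr, of t] ep0 by (auto simp: T_def t_def)
    define B where "B = (\<lambda>i j. ((if i = j then t else 0) - A i j) / (n * t))"
    have "feas F B"
      unfolding feas_def
    proof (intro conjI allI impI)
      fix i j show "B i j = B j i" using Asym by (simp add: B_def)
    next
      fix y :: "'v \<Rightarrow> real"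
      have "quad B y = (t * (\<Sum>i\<in>UNIV. y i * y i) - quad A y) / (n * t)"
        unfolding B_def quad_lin quad_diag ..
      moreover have "t * (\<Sum>i\<in>UNIV. y i * y i) - quad A y \<ge> 0"
        using Aq[rule_format, of y] by (smt (verit) zero_le_power2)
      ultimately show "0 \<le> quad B y" using n0 tpos by simp
    next
      have "(\<Sum>i\<in>UNIV. B i i) = (\<Sum>i\<in>(UNIV::'v set). t / (n * t))" using A0 irr by (simp add: B_def)
      also have "\<dots> = 1" using n0 tpos by (simp add: n_def)
      finally show "(\<Sum>i\<in>UNIV. B i i) = 1" .
    next
      fix i j assume "F i j"
      then show "B i j = 0" using F A0 by (simp add: B_def)
    qed
    have totB: "tot B = (n * t - quad A (\<lambda>_. 1)) / (n * t)"
    proof -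
      have "tot B = quad B (\<lambda>_. 1)" by (simp add: tot_def quad_def)
      also have "\<dots> = (t * (\<Sum>i\<in>(UNIV::'v set). 1 * 1) - quad A (\<lambda>_. 1)) / (n * t)"
        unfolding B_def quad_lin quad_diag ..
      finally show ?thesis by (simp add: n_def mult.commute)
    qed
    have "quad A (\<lambda>_. 1) + n^2 \<le> t * n"
      using Aq[rule_format, of "\<lambda>_. 1"] by (simp add: n_def)
    then have "n * t - quad A (\<lambda>_. 1) \<ge> n * n" by (simp add: power2_eq_square algebra_simps)
    then have "tot B \<ge> (n * n) / (n * t)"
      unfolding totB using n0 tpos by (intro divide_right_mono) auto
    moreover have "(n * n) / (n * t) = n / t" using n0 by simp
    ultimately have "n / t \<le> tot B" by simp
    also have "\<dots> \<le> lovasz_theta F" by (rule theta_ge[OF \<open>feas F B\<close>])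
    finally show ?thesis by (simp add: t_def)
  qed
  have "n \<le> lovasz_theta F * T + d" if "d > 0" for d
  proof -
    have ep: "d / lovasz_theta F > 0" using that F1 by simp
    have "n / (T + d / lovasz_theta F) \<le> lovasz_theta F" by (rule key[OF ep])
    then have "n \<le> lovasz_theta F * (T + d / lovasz_theta F)"
      using T1 ep by (simp add: divide_le_eq)
    also have "\<dots> = lovasz_theta F * T + d" using F1 by (simp add: distrib_left)
    finally show ?thesis .
  qed
  then have "n \<le> lovasz_theta F * T" by (rule field_le_epsilon)
  then show ?thesis by (simp add: n_def T_def mult.commute)
qed


lemma final_alg:
  fixes a b x y q :: real
  assumes "a > 0" "b > 0" "x > 0" "y > 0" "a * b = q" "q \<le> x * y"
  shows "(a = x \<and> b = y) \<noteq> (a < x \<or> b < y)"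
proof (cases "a = x \<and> b = y")
  case True then show ?thesis by simp
next
  case False
  have "a < x \<or> b < y"
  proof (rule ccontr)
    assume "\<not> (a < x \<or> b < y)"
    then have xa: "x \<le> a" and yb: "y \<le> b" by auto
    have i1: "x * y \<le> a * y" using xa assms by (intro mult_right_mono) auto
    have i2: "a * y \<le> a * b" using yb assms by (intro mult_left_mono) auto
    have eq1: "a * y = a * b" using i1 i2 assms by linarith
    have eq2: "x * y = a * y" using i1 i2 assms by linarith
    have "y = b" by (metis eq1 assms(1) less_irrefl mult_left_cancel)
    moreover have "x = a" by (metis eq2 assms(4) less_irrefl mult_right_cancel)
    ultimately show False using False by simp
  qed
  then show ?thesis using False by simp
qed

theorem corollary1:
  fixes S :: "'a::{field,finite} set"
  assumes "0 \<notin> S"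
    and "\<forall>x\<in>S. - x \<in> S"
  defines "Sc \<equiv> (UNIV - {0}) - S"
  shows "(rho_lin S = lovasz_theta (cayley_adj S) \<and> rho_lin Sc = lovasz_theta (cayley_adj Sc))
         \<noteq> (rho_lin S < lovasz_theta (cayley_adj S) \<or> rho_lin Sc < lovasz_theta (cayley_adj Sc))"
proof -
  define q where "q = real (card (UNIV :: 'a set))"
  have "card {0::'a, 1} \<le> card (UNIV :: 'a set)" by (rule card_mono) auto
  then have q2: "q \<ge> 2" by (simp add: q_def)
  have cS: "card S + card Sc = card (UNIV :: 'a set) - 1"
  proof -
    have sub: "S \<subseteq> UNIV - {0}" using assms(1) by auto
    have "card Sc = card (UNIV - {0::'a}) - card S"
      unfolding Sc_def by (rule card_Diff_subset) (use sub finite_subset in auto)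
    moreover have "card S \<le> card (UNIV - {0::'a})" using sub by (intro card_mono) auto
    moreover have "card (UNIV - {0::'a}) = card (UNIV :: 'a set) - 1" by (simp add: card_Diff_singleton)
    ultimately show ?thesis by simp
  qed
  have cSr: "real (card S) + real (card Sc) = q - 1"
    using cS q2 unfolding q_def by (simp add: of_nat_diff[symmetric])
  have prod: "rho_lin S * rho_lin Sc = q"
  proof -
    have "rho_lin S * rho_lin Sc = q powr ((1 - real (card S) / (q - 1)) + (1 - real (card Sc) / (q - 1)))"
      unfolding rho_lin_def q_def[symmetric] by (rule powr_add[symmetric])
    also have "(1 - real (card S) / (q - 1)) + (1 - real (card Sc) / (q - 1)) = 2 - (real (card S) + real (card Sc)) / (q - 1)"
      by (simp add: add_divide_distrib)
    also have "\<dots> = 1" using cSr q2 by simp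
    finally show ?thesis using q2 by simp
  qed
  have pos1: "rho_lin S > 0" "rho_lin Sc > 0" using q2 by (auto simp: rho_lin_def)
  have symE: "\<forall>i j. cayley_adj S i j \<longrightarrow> cayley_adj S j i"
    using assms(2) by (auto simp: cayley_adj_def)
  have irr: "\<forall>i. \<not> cayley_adj S i i" using assms(1) by (simp add: cayley_adj_def)
  have Fc: "\<forall>i j. cayley_adj Sc i j \<longleftrightarrow> (i \<noteq> j \<and> \<not> cayley_adj S i j)"
    by (auto simp: cayley_adj_def Sc_def)
  have pg: "real CARD('a) \<le> lovasz_theta (cayley_adj S) * lovasz_theta (cayley_adj Sc)"
    by (rule prod_ge[OF symE irr Fc])
  have t1: "lovasz_theta (cayley_adj S) \<ge> 1" by (rule theta_ge1[of "cayley_adj S", OF irr])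
  have t2: "lovasz_theta (cayley_adj Sc) \<ge> 1" by (rule theta_ge1) (auto simp: cayley_adj_def Sc_def)
  show ?thesis
    by (rule final_alg[OF pos1 _ _ prod]) (use t1 t2 pg q_def in auto)
qed

end
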